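(* Let $\pi_2$ be the five-dimensional complex associative algebra with basis $e_1,\dots,e_5$ and nonzero products $e_1e_1=e_2$, $e_1e_2=e_2e_1=e_3$, $e_1e_4=e_4e_1=e_5$, $e_4e_4=e_5$ (all other products of basis elements are zero). A linear operator on $\pi_2$ is a local automorphism if and only if its matrix has the form $$\begin{pmatrix} b_{11} & 0 & 0 & 0 & 0 \\ b_{21} & b_{22} & 0 & 0 & 0 \\ b_{31} & b_{32} & b_{33} & b_{34} & 0 \\ b_{41} & 0 & 0 & b_{41}+b_{11} & 0 \\ b_{51} & b_{52} & 0 & b_{54} & b_{22}+b_{52} \end{pmatrix},$$ where $b_{11},b_{21},b_{22},b_{31},b_{32},b_{33},b_{34},b_{41},b_{51},b_{52},b_{54}\in\mathbb{C}$ satisfy $b_{11}b_{22}b_{33}(b_{41}+b_{11})(b_{22}+b_{52})\neq 0$.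
   Context: The matrix of a linear operator $T$ is taken with respect to the basis $e_1,\dots,e_5$, with the $j$-th column giving the coordinates of $T(e_j)$ (so $\overline{T(x)}=B\bar{x}$ for coordinate columns). An automorphism of an algebra $A$ is a bijective linear map $\Phi$ with $\Phi(xy)=\Phi(x)\Phi(y)$ for all $x,y$. A linear map $\Phi:A\to A$ is a local automorphism if for every $\nu\in A$ there is an automorphism $\varphi_\nu$ of $A$ (depending on $\nu$) with $\Phi(\nu)=\varphi_\nu(\nu)$. *)

theory Defs
  imports "HOL-Analysis.Analysis"
begin

(* The algebra pi_2 is modelled on complex^5; the basis vector e_k (k = 1..5)
   is axis (ix k) 1, where ix k is the k-th index of the 5-element index type
   (ix 5 = 0 in the numeral type 5, which is distinct from ix 1, ..., ix 4). *)

definition ix :: "nat \<Rightarrow> 5" where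
  "ix k = of_nat k"

definition e :: "nat \<Rightarrow> complex ^ 5" where
  "e k = axis (ix k) 1"

definition co :: "complex ^ 5 \<Rightarrow> nat \<Rightarrow> complex" where
  "co x k = x $ ix k"

definition pi2_mult :: "complex ^ 5 \<Rightarrow> complex ^ 5 \<Rightarrow> complex ^ 5" where
  "pi2_mult x y =
     co x 1 * co y 1 *s e 2
     + (co x 1 * co y 2 + co x 2 * co y 1) *s e 3
     + (co x 1 * co y 4 + co x 4 * co y 1 + co x 4 * co y 4) *s e 5"

definition clinear :: "(complex ^ 5 \<Rightarrow> complex ^ 5) \<Rightarrow> bool" where
  "clinear f \<longleftrightarrow> Vector_Spaces.linear (*s) (*s) f"

definition pi2_automorphism :: "(complex ^ 5 \<Rightarrow> complex ^ 5) \<Rightarrow> bool" where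
  "pi2_automorphism \<phi> \<longleftrightarrow> clinear \<phi> \<and> bij \<phi> \<and>
     (\<forall>x y. \<phi> (pi2_mult x y) = pi2_mult (\<phi> x) (\<phi> y))"

definition pi2_local_automorphism :: "(complex ^ 5 \<Rightarrow> complex ^ 5) \<Rightarrow> bool" where
  "pi2_local_automorphism \<Phi> \<longleftrightarrow> clinear \<Phi> \<and>
     (\<forall>v. \<exists>\<phi>. pi2_automorphism \<phi> \<and> \<Phi> v = \<phi> v)"

definition matentry :: "(complex ^ 5 \<Rightarrow> complex ^ 5) \<Rightarrow> nat \<Rightarrow> nat \<Rightarrow> complex" where
  "matentry T i j = co (T (e j)) i"

definition has_matrix :: "(complex ^ 5 \<Rightarrow> complex ^ 5) \<Rightarrow> complex list list \<Rightarrow> bool" where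
  "has_matrix T M \<longleftrightarrow>
     (\<forall>i\<in>{1..5}. \<forall>j\<in>{1..5}. matentry T i j = M ! (i - 1) ! (j - 1))"

end

theory Submission
  imports Defs
begin

declare One_nat_def[simp del]

lemma five: "(5::5) = 0" by simp

lemma idx5: "(i::5) = 0 \<or> i = 1 \<or> i = 2 \<or> i = 3 \<or> i = 4"
proof (cases i)
  case (of_int z)
  then have "z = 0 \<or> z = 1 \<or> z = 2 \<or> z = 3 \<or> z = 4" by auto
  then show ?thesis using of_int by auto
qed

lemma cl: "clinear f \<longleftrightarrow> (\<forall>x y. f (x + y) = f x + f y) \<and> (\<forall>c x. f (c *s x) = c *s f x)"
  unfolding clinear_def by (subst Vector_Spaces.linear_iff) (simp add: vec.vector_space_axioms)

lemma co_add[simp]: "co (x + y) k = co x k + co y k" by (simp add: co_def)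
lemma co_diff[simp]: "co (x - y) k = co x k - co y k" by (simp add: co_def)
lemma co_scale[simp]: "co (c *s x) k = c * co x k" by (simp add: co_def)
lemma co_zero[simp]: "co 0 k = 0" by (simp add: co_def)

lemma co_e[simp]:
  "co (e 1) 1 = 1" "co (e 1) 2 = 0" "co (e 1) 3 = 0" "co (e 1) 4 = 0" "co (e 1) 5 = 0"
  "co (e 2) 1 = 0" "co (e 2) 2 = 1" "co (e 2) 3 = 0" "co (e 2) 4 = 0" "co (e 2) 5 = 0"
  "co (e 3) 1 = 0" "co (e 3) 2 = 0" "co (e 3) 3 = 1" "co (e 3) 4 = 0" "co (e 3) 5 = 0"
  "co (e 4) 1 = 0" "co (e 4) 2 = 0" "co (e 4) 3 = 0" "co (e 4) 4 = 1" "co (e 4) 5 = 0"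
  "co (e 5) 1 = 0" "co (e 5) 2 = 0" "co (e 5) 3 = 0" "co (e 5) 4 = 0" "co (e 5) 5 = 1"
  by (simp_all add: co_def e_def axis_def ix_def)

lemma co_mult[simp]:
  "co (pi2_mult x y) 1 = 0"
  "co (pi2_mult x y) 2 = co x 1 * co y 1"
  "co (pi2_mult x y) 3 = co x 1 * co y 2 + co x 2 * co y 1"
  "co (pi2_mult x y) 4 = 0"
  "co (pi2_mult x y) 5 = co x 1 * co y 4 + co x 4 * co y 1 + co x 4 * co y 4"
  by (simp_all add: pi2_mult_def)

lemma vec_eq5:
  assumes "co x 1 = co y 1" "co x 2 = co y 2" "co x 3 = co y 3" "co x 4 = co y 4" "co x 5 = co y 5"
  shows "x = y"
proof -
  have "x $ i = y $ i" for i
    using idx5[of i] assms by (auto simp: co_def ix_def five)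
  then show ?thesis by (simp add: vec_eq_iff)
qed

lemma decomp: "x = co x 1 *s e 1 + co x 2 *s e 2 + co x 3 *s e 3 + co x 4 *s e 4 + co x 5 *s e 5"
  by (rule vec_eq5) simp_all

lemma lin_expand:
  assumes "clinear f"
  shows "f x = co x 1 *s f (e 1) + co x 2 *s f (e 2) + co x 3 *s f (e 3) + co x 4 *s f (e 4) + co x 5 *s f (e 5)"
proof -
  have "f x = f (co x 1 *s e 1 + co x 2 *s e 2 + co x 3 *s e 3 + co x 4 *s e 4 + co x 5 *s e 5)"
    using decomp[of x] by simp
  also have "\<dots> = co x 1 *s f (e 1) + co x 2 *s f (e 2) + co x 3 *s f (e 3) + co x 4 *s f (e 4) + co x 5 *s f (e 5)"
    using assms by (simp add: cl)
  finally show ?thesis .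
qed

lemma lin_co:
  assumes "clinear f"
  shows "co (f x) k = co x 1 * matentry f k 1 + co x 2 * matentry f k 2 + co x 3 * matentry f k 3
     + co x 4 * matentry f k 4 + co x 5 * matentry f k 5"
  by (subst lin_expand[OF assms]) (simp add: matentry_def)

lemma lin_zero: "clinear f \<Longrightarrow> f 0 = 0"
  unfolding cl by (metis vector_smult_lzero)

definition AC :: "complex \<Rightarrow> complex \<Rightarrow> complex \<Rightarrow> complex \<Rightarrow> complex \<Rightarrow> complex \<Rightarrow> complex
   \<Rightarrow> complex^5 \<Rightarrow> complex^5 \<Rightarrow> bool" where
  "AC a1 a2 a3 a4 a5 d3 d5 x y \<longleftrightarrow>
     co y 1 = a1 * co x 1 \<and>
     co y 2 = a2 * co x 1 + a1^2 * co x 2 \<and>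
     co y 3 = a3 * co x 1 + 2 * a1 * a2 * co x 2 + a1^3 * co x 3 + d3 * co x 4 \<and>
     co y 4 = a4 * co x 1 + (a1 + a4) * co x 4 \<and>
     co y 5 = a5 * co x 1 + ((a1 + a4)^2 - a1^2) * co x 2 + d5 * co x 4 + (a1 + a4)^2 * co x 5"

lemma e_prods:
  "pi2_mult (e 1) (e 1) = e 2" "pi2_mult (e 1) (e 2) = e 3" "pi2_mult (e 2) (e 4) = 0"
  "pi2_mult (e 1) (e 4) = e 5" "pi2_mult (e 4) (e 4) = e 5"
  by (rule vec_eq5; simp)+

lemma classify:
  assumes "pi2_automorphism \<phi>"
  shows "\<exists>a1 a2 a3 a4 a5 d3 d5. a1 \<noteq> 0 \<and> a1 + a4 \<noteq> 0 \<and> (\<forall>x. AC a1 a2 a3 a4 a5 d3 d5 x (\<phi> x))"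
proof -
  have lin: "clinear \<phi>" and inj: "inj \<phi>" and hom: "\<And>x y. \<phi> (pi2_mult x y) = pi2_mult (\<phi> x) (\<phi> y)"
    using assms unfolding pi2_automorphism_def by (auto simp: bij_def)
  define a where "a = \<phi> (e 1)"
  define d where "d = \<phi> (e 4)"
  have p2: "\<phi> (e 2) = pi2_mult a a" using hom[of "e 1" "e 1"] by (simp add: e_prods a_def)
  have p3: "\<phi> (e 3) = pi2_mult a (pi2_mult a a)" using hom[of "e 1" "e 2"] by (simp add: e_prods p2 a_def)
  have p5: "\<phi> (e 5) = pi2_mult d d" using hom[of "e 4" "e 4"] by (simp add: e_prods d_def)
  have p5': "\<phi> (e 5) = pi2_mult a d" using hom[of "e 1" "e 4"] by (simp add: e_prods a_def d_def)
  have p0: "pi2_mult (pi2_mult a a) d = 0" using hom[of "e 2" "e 4"] lin_zero[OF lin]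
    by (simp add: e_prods p2 d_def)
  have ne: "\<phi> (e j) \<noteq> 0" if "e j \<noteq> 0" for j
    using inj that lin_zero[OF lin] by (metis injD)
  have e3: "e 3 \<noteq> 0" "e 5 \<noteq> 0" by (metis co_e(13) co_zero zero_neq_one, metis co_e(25) co_zero zero_neq_one)
  have a1: "co a 1 \<noteq> 0"
  proof
    assume h: "co a 1 = 0"
    have "\<phi> (e 3) = 0" unfolding p3 by (rule vec_eq5) (simp_all add: h)
    then show False using ne e3 by blast
  qed
  have d1: "co d 1 = 0" using arg_cong[OF p0, of "\<lambda>v. co v 3"] a1 by simp
  have d2: "co d 2 = 0" using arg_cong[OF trans[OF p5'[symmetric] p5], of "\<lambda>v. co v 3"] a1 d1 by simp
  have d4e: "co d 4 * (co a 1 + co a 4) = co d 4 * co d 4"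
    using arg_cong[OF trans[OF p5'[symmetric] p5], of "\<lambda>v. co v 5"] d1 by (simp add: algebra_simps)
  have d4: "co d 4 \<noteq> 0"
  proof
    assume h: "co d 4 = 0"
    have "\<phi> (e 5) = 0" unfolding p5 by (rule vec_eq5) (simp_all add: h d1 d2)
    then show False using ne e3 by blast
  qed
  have d4v: "co d 4 = co a 1 + co a 4" using d4e d4 by simp
  show ?thesis
  proof (intro exI conjI allI)
    show "co a 1 \<noteq> 0" by (fact a1)
    show "co a 1 + co a 4 \<noteq> 0" using d4 d4v by simp
    fix x
    show "AC (co a 1) (co a 2) (co a 3) (co a 4) (co a 5) (co d 3) (co d 5) x (\<phi> x)"
      unfolding AC_def lin_co[OF lin] matentry_def p2 p3 p5 a_def[symmetric] d_def[symmetric]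
      using d1 d2 d4v by (simp add: algebra_simps power2_eq_square power3_eq_cube)
  qed
qed


definition mkv :: "complex \<Rightarrow> complex \<Rightarrow> complex \<Rightarrow> complex \<Rightarrow> complex \<Rightarrow> complex^5" where
  "mkv c1 c2 c3 c4 c5 = (\<chi> i. if i = 1 then c1 else if i = 2 then c2 else if i = 3 then c3
      else if i = 4 then c4 else c5)"

lemma co_mkv[simp]:
  "co (mkv c1 c2 c3 c4 c5) 1 = c1" "co (mkv c1 c2 c3 c4 c5) 2 = c2" "co (mkv c1 c2 c3 c4 c5) 3 = c3"
  "co (mkv c1 c2 c3 c4 c5) 4 = c4" "co (mkv c1 c2 c3 c4 c5) 5 = c5"
  by (simp_all add: mkv_def co_def ix_def five)

lemma construct:
  assumes a1: "a1 \<noteq> 0" and s: "a1 + a4 \<noteq> 0"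
  shows "\<exists>\<phi>. pi2_automorphism \<phi> \<and> (\<forall>x. AC a1 a2 a3 a4 a5 d3 d5 x (\<phi> x))"
proof -
  define s where "s = a1 + a4"
  have sn: "s \<noteq> 0" using s s_def by simp
  define f where "f x = mkv (a1 * co x 1) (a2 * co x 1 + a1^2 * co x 2)
     (a3 * co x 1 + 2 * a1 * a2 * co x 2 + a1^3 * co x 3 + d3 * co x 4)
     (a4 * co x 1 + s * co x 4)
     (a5 * co x 1 + (s^2 - a1^2) * co x 2 + d5 * co x 4 + s^2 * co x 5)" for x
  define g where "g y = (let x1 = co y 1 / a1; x2 = (co y 2 - a2 * x1) / a1^2;
       x4 = (co y 4 - a4 * x1) / s;
       x3 = (co y 3 - a3 * x1 - 2 * a1 * a2 * x2 - d3 * x4) / a1^3;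
       x5 = (co y 5 - a5 * x1 - (s^2 - a1^2) * x2 - d5 * x4) / s^2 in mkv x1 x2 x3 x4 x5)" for y
  have lin: "clinear f" unfolding cl
    by (intro conjI allI; rule vec_eq5) (simp_all add: f_def algebra_simps)
  have gf: "g (f x) = x" for x
    by (rule vec_eq5) (simp_all add: f_def g_def Let_def a1 sn field_simps)
  have fg: "f (g y) = y" for y
  proof -
    define x1 where "x1 = co y 1 / a1"
    define x2 where "x2 = (co y 2 - a2 * x1) / a1^2"
    define x4 where "x4 = (co y 4 - a4 * x1) / s"
    define x3 where "x3 = (co y 3 - a3 * x1 - 2 * a1 * a2 * x2 - d3 * x4) / a1^3"
    define x5 where "x5 = (co y 5 - a5 * x1 - (s^2 - a1^2) * x2 - d5 * x4) / s^2"
    have gy: "g y = mkv x1 x2 x3 x4 x5" unfolding g_def Let_def x1_def x2_def x3_def x4_def x5_def ..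
    have h1: "a1 * x1 = co y 1" unfolding x1_def using a1 by simp
    have h2: "a1^2 * x2 = co y 2 - a2 * x1" unfolding x2_def using a1 by simp
    have h4: "s * x4 = co y 4 - a4 * x1" unfolding x4_def using sn by simp
    have h3: "a1^3 * x3 = co y 3 - a3 * x1 - 2 * a1 * a2 * x2 - d3 * x4" unfolding x3_def using a1 by simp
    have h5: "s^2 * x5 = co y 5 - a5 * x1 - (s^2 - a1^2) * x2 - d5 * x4" unfolding x5_def using sn by simp
    show ?thesis unfolding gy
      by (rule vec_eq5) (simp_all add: f_def h1 h2 h3 h4 h5)
  qed
  have bij: "bij f" using gf fg by (metis bijI' )
  have hom: "f (pi2_mult x y) = pi2_mult (f x) (f y)" for x y
    by (rule vec_eq5) (simp_all add: f_def s_def algebra_simps power2_eq_square power3_eq_cube)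
  show ?thesis
    apply (rule exI[of _ f])
    using lin bij hom by (auto simp: pi2_automorphism_def AC_def f_def s_def)
qed


lemma local_iff:
  assumes "clinear T"
  shows "pi2_local_automorphism T \<longleftrightarrow>
    (\<forall>v. \<exists>a1 a2 a3 a4 a5 d3 d5. a1 \<noteq> 0 \<and> a1 + a4 \<noteq> 0 \<and> AC a1 a2 a3 a4 a5 d3 d5 v (T v))"
proof
  assume "pi2_local_automorphism T"
  then have h: "\<forall>v. \<exists>\<phi>. pi2_automorphism \<phi> \<and> T v = \<phi> v" by (simp add: pi2_local_automorphism_def)
  show "\<forall>v. \<exists>a1 a2 a3 a4 a5 d3 d5. a1 \<noteq> 0 \<and> a1 + a4 \<noteq> 0 \<and> AC a1 a2 a3 a4 a5 d3 d5 v (T v)"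
  proof
    fix v
    from h obtain \<phi> where "pi2_automorphism \<phi>" "T v = \<phi> v" by blast
    then show "\<exists>a1 a2 a3 a4 a5 d3 d5. a1 \<noteq> 0 \<and> a1 + a4 \<noteq> 0 \<and> AC a1 a2 a3 a4 a5 d3 d5 v (T v)"
      using classify by metis
  qed
next
  assume h: "\<forall>v. \<exists>a1 a2 a3 a4 a5 d3 d5. a1 \<noteq> 0 \<and> a1 + a4 \<noteq> 0 \<and> AC a1 a2 a3 a4 a5 d3 d5 v (T v)"
  have "\<exists>\<phi>. pi2_automorphism \<phi> \<and> T v = \<phi> v" for v
  proof -
    from h obtain a1 a2 a3 a4 a5 d3 d5 where "a1 \<noteq> 0" "a1 + a4 \<noteq> 0" and ac: "AC a1 a2 a3 a4 a5 d3 d5 v (T v)"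
      by blast
    then obtain \<phi> where p: "pi2_automorphism \<phi>" and pa: "\<forall>x. AC a1 a2 a3 a4 a5 d3 d5 x (\<phi> x)"
      using construct by blast
    have "T v = \<phi> v" using ac pa[rule_format, of v] by (intro vec_eq5) (simp_all add: AC_def)
    then show ?thesis using p by blast
  qed
  then show "pi2_local_automorphism T" using assms by (simp add: pi2_local_automorphism_def)
qed

lemma cube_root: "(c::complex) \<noteq> 0 \<Longrightarrow> \<exists>z. z \<noteq> 0 \<and> z^3 = c"
proof -
  assume c: "c \<noteq> 0"
  have "exp (Ln c / 3) ^ 3 = exp (of_nat 3 * (Ln c / 3))" by (simp only: exp_of_nat_mult)
  also have "\<dots> = c" using c by simp
  finally show ?thesis by (intro exI[of _ "exp (Ln c / 3)"]) simp
qed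

lemma hm_expand:
  "has_matrix T M \<longleftrightarrow> (\<forall>i\<in>{1,2,3,4,5}. \<forall>j\<in>{1,2,3,4,5}. matentry T i j = M ! (i - 1) ! (j - 1))"
proof -
  have "{1..5::nat} = {1,2,3,4,5}" by auto
  then show ?thesis by (simp add: has_matrix_def)
qed

lemma hm_iff: "has_matrix T [[b11, 0,   0,   0,         0],
          [b21, b22, 0,   0,         0],
          [b31, b32, b33, b34,       0],
          [b41, 0,   0,   b41 + b11, 0],
          [b51, b52, 0,   b54,       b22 + b52]] \<longleftrightarrow>
   (matentry T 1 1 = b11 \<and> matentry T 1 2 = 0 \<and> matentry T 1 3 = 0 \<and> matentry T 1 4 = 0 \<and> matentry T 1 5 = 0 \<and>
    matentry T 2 1 = b21 \<and> matentry T 2 2 = b22 \<and> matentry T 2 3 = 0 \<and> matentry T 2 4 = 0 \<and> matentry T 2 5 = 0 \<and>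
    matentry T 3 1 = b31 \<and> matentry T 3 2 = b32 \<and> matentry T 3 3 = b33 \<and> matentry T 3 4 = b34 \<and> matentry T 3 5 = 0 \<and>
    matentry T 4 1 = b41 \<and> matentry T 4 2 = 0 \<and> matentry T 4 3 = 0 \<and> matentry T 4 4 = b41 + b11 \<and> matentry T 4 5 = 0 \<and>
    matentry T 5 1 = b51 \<and> matentry T 5 2 = b52 \<and> matentry T 5 3 = 0 \<and> matentry T 5 4 = b54 \<and> matentry T 5 5 = b22 + b52)"
  by (simp add: hm_expand One_nat_def numeral_eq_Suc)

theorem theorem3p2:
  fixes T :: "complex ^ 5 \<Rightarrow> complex ^ 5"
  assumes "clinear T"
  shows "pi2_local_automorphism T \<longleftrightarrow>
    (\<exists>b11 b21 b22 b31 b32 b33 b34 b41 b51 b52 b54.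
       has_matrix T
         [[b11, 0,   0,   0,         0],
          [b21, b22, 0,   0,         0],
          [b31, b32, b33, b34,       0],
          [b41, 0,   0,   b41 + b11, 0],
          [b51, b52, 0,   b54,       b22 + b52]] \<and>
       b11 * b22 * b33 * (b41 + b11) * (b22 + b52) \<noteq> 0)"
proof
  assume "pi2_local_automorphism T"
  then have L: "\<And>v. \<exists>a1 a2 a3 a4 a5 d3 d5. a1 \<noteq> 0 \<and> a1 + a4 \<noteq> 0 \<and> AC a1 a2 a3 a4 a5 d3 d5 v (T v)"
    using local_iff[OF assms] by blast
  let ?m = "matentry T"
  have me: "co (T (e j)) k = ?m k j" for j k by (simp add: matentry_def)
  have f1: "?m 1 1 \<noteq> 0"
  proof -
    from L[of "e 1"] obtain a1 a2 a3 a4 a5 d3 d5 where "a1 \<noteq> 0" "AC a1 a2 a3 a4 a5 d3 d5 (e 1) (T (e 1))" by blast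
    then show ?thesis by (simp add: AC_def me)
  qed
  have f2: "?m 1 2 = 0" "?m 2 2 \<noteq> 0" "?m 4 2 = 0"
  proof -
    from L[of "e 2"] obtain a1 a2 a3 a4 a5 d3 d5 where "a1 \<noteq> 0" "AC a1 a2 a3 a4 a5 d3 d5 (e 2) (T (e 2))" by blast
    then show "?m 1 2 = 0" "?m 2 2 \<noteq> 0" "?m 4 2 = 0" by (simp_all add: AC_def me)
  qed
  have f3: "?m 1 3 = 0" "?m 2 3 = 0" "?m 3 3 \<noteq> 0" "?m 4 3 = 0" "?m 5 3 = 0"
  proof -
    from L[of "e 3"] obtain a1 a2 a3 a4 a5 d3 d5 where "a1 \<noteq> 0" "AC a1 a2 a3 a4 a5 d3 d5 (e 3) (T (e 3))" by blast
    then show "?m 1 3 = 0" "?m 2 3 = 0" "?m 3 3 \<noteq> 0" "?m 4 3 = 0" "?m 5 3 = 0" by (simp_all add: AC_def me)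
  qed
  have f4: "?m 1 4 = 0" "?m 2 4 = 0" "?m 4 4 \<noteq> 0"
  proof -
    from L[of "e 4"] obtain a1 a2 a3 a4 a5 d3 d5 where "a1 + a4 \<noteq> 0" "AC a1 a2 a3 a4 a5 d3 d5 (e 4) (T (e 4))" by blast
    then show "?m 1 4 = 0" "?m 2 4 = 0" "?m 4 4 \<noteq> 0" by (simp_all add: AC_def me)
  qed
  have f5: "?m 1 5 = 0" "?m 2 5 = 0" "?m 3 5 = 0" "?m 4 5 = 0" "?m 5 5 \<noteq> 0"
  proof -
    from L[of "e 5"] obtain a1 a2 a3 a4 a5 d3 d5 where "a1 + a4 \<noteq> 0" "AC a1 a2 a3 a4 a5 d3 d5 (e 5) (T (e 5))" by blast
    then show "?m 1 5 = 0" "?m 2 5 = 0" "?m 3 5 = 0" "?m 4 5 = 0" "?m 5 5 \<noteq> 0" by (simp_all add: AC_def me)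
  qed
  have f6: "?m 4 4 = ?m 4 1 + ?m 1 1"
  proof -
    from L[of "e 1 - e 4"] obtain a1 a2 a3 a4 a5 d3 d5 where "AC a1 a2 a3 a4 a5 d3 d5 (e 1 - e 4) (T (e 1 - e 4))" by blast
    then have "?m 1 1 - ?m 1 4 = a1" "?m 4 1 - ?m 4 4 = a4 - (a1 + a4)"
      by (simp_all add: AC_def lin_co[OF assms])
    then show ?thesis using f4 by (simp add: algebra_simps)
  qed
  have f7: "?m 5 5 = ?m 2 2 + ?m 5 2"
  proof -
    from L[of "e 2 - e 5"] obtain a1 a2 a3 a4 a5 d3 d5 where "AC a1 a2 a3 a4 a5 d3 d5 (e 2 - e 5) (T (e 2 - e 5))" by blast
    then have "?m 2 2 - ?m 2 5 = a1^2" "?m 5 2 - ?m 5 5 = ((a1 + a4)^2 - a1^2) - (a1 + a4)^2"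
      by (simp_all add: AC_def lin_co[OF assms])
    then show ?thesis using f5 by (simp add: algebra_simps)
  qed
  show "\<exists>b11 b21 b22 b31 b32 b33 b34 b41 b51 b52 b54.
       has_matrix T
         [[b11, 0,   0,   0,         0],
          [b21, b22, 0,   0,         0],
          [b31, b32, b33, b34,       0],
          [b41, 0,   0,   b41 + b11, 0],
          [b51, b52, 0,   b54,       b22 + b52]] \<and>
       b11 * b22 * b33 * (b41 + b11) * (b22 + b52) \<noteq> 0"
    apply (rule exI[of _ "?m 1 1"], rule exI[of _ "?m 2 1"], rule exI[of _ "?m 2 2"],
        rule exI[of _ "?m 3 1"], rule exI[of _ "?m 3 2"], rule exI[of _ "?m 3 3"],
        rule exI[of _ "?m 3 4"], rule exI[of _ "?m 4 1"], rule exI[of _ "?m 5 1"],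
        rule exI[of _ "?m 5 2"], rule exI[of _ "?m 5 4"])
    unfolding hm_iff using f1 f2 f3 f4 f5 f6 f7 by simp
next
  assume "\<exists>b11 b21 b22 b31 b32 b33 b34 b41 b51 b52 b54.
       has_matrix T
         [[b11, 0,   0,   0,         0],
          [b21, b22, 0,   0,         0],
          [b31, b32, b33, b34,       0],
          [b41, 0,   0,   b41 + b11, 0],
          [b51, b52, 0,   b54,       b22 + b52]] \<and>
       b11 * b22 * b33 * (b41 + b11) * (b22 + b52) \<noteq> 0"
  then obtain b11 b21 b22 b31 b32 b33 b34 b41 b51 b52 b54 where
    hm: "has_matrix T
         [[b11, 0,   0,   0,         0],
          [b21, b22, 0,   0,         0],
          [b31, b32, b33, b34,       0],
          [b41, 0,   0,   b41 + b11, 0],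
          [b51, b52, 0,   b54,       b22 + b52]]" and nz: "b11 * b22 * b33 * (b41 + b11) * (b22 + b52) \<noteq> 0"
    by blast
  have n11: "b11 \<noteq> 0" and n22: "b22 \<noteq> 0" and n33: "b33 \<noteq> 0" and n44: "b41 + b11 \<noteq> 0"
    and n55: "b22 + b52 \<noteq> 0" using nz by auto
  obtain r where r: "r \<noteq> 0" "r^3 = b33" using cube_root[OF n33] by blast
  define q where "q = csqrt b22"
  have q: "q \<noteq> 0" "q^2 = b22" using n22 by (simp_all add: q_def)
  define t where "t = csqrt (b22 + b52)"
  have t: "t \<noteq> 0" "t^2 = b22 + b52" using n55 by (simp_all add: t_def)
  have Tv: "co (T v) 1 = b11 * co v 1"
    "co (T v) 2 = b21 * co v 1 + b22 * co v 2"
    "co (T v) 3 = b31 * co v 1 + b32 * co v 2 + b33 * co v 3 + b34 * co v 4"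
    "co (T v) 4 = b41 * co v 1 + (b41 + b11) * co v 4"
    "co (T v) 5 = b51 * co v 1 + b52 * co v 2 + b54 * co v 4 + (b22 + b52) * co v 5" for v
    using hm unfolding hm_iff by (simp_all add: lin_co[OF assms] algebra_simps)
  have "\<exists>a1 a2 a3 a4 a5 d3 d5. a1 \<noteq> 0 \<and> a1 + a4 \<noteq> 0 \<and> AC a1 a2 a3 a4 a5 d3 d5 v (T v)" for v
  proof -
    define x1 where "x1 = co v 1"
    define x2 where "x2 = co v 2"
    define x3 where "x3 = co v 3"
    define x4 where "x4 = co v 4"
    define x5 where "x5 = co v 5"
    note defs = x1_def[symmetric] x2_def[symmetric] x3_def[symmetric] x4_def[symmetric] x5_def[symmetric]
    show ?thesis
    proof (cases "x1 = 0")
      case False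
      show ?thesis
        apply (rule exI[of _ b11], rule exI[of _ "(b21 * x1 + b22 * x2 - b11^2 * x2) / x1"],
            rule exI[of _ "(b31 * x1 + b32 * x2 + b33 * x3 + b34 * x4
                - 2 * b11 * ((b21 * x1 + b22 * x2 - b11^2 * x2) / x1) * x2 - b11^3 * x3) / x1"],
            rule exI[of _ b41],
            rule exI[of _ "(b51 * x1 + b52 * x2 + b54 * x4 + (b22 + b52) * x5
                - ((b11 + b41)^2 - b11^2) * x2 - (b11 + b41)^2 * x5) / x1"],
            rule exI[of _ 0], rule exI[of _ 0])
        using False n11 n44 by (simp add: AC_def Tv defs field_simps)
    next
      case x1: True
      show ?thesis
      proof (cases "x4 = 0")
        case False
        show ?thesis
          apply (rule exI[of _ q], rule exI[of _ 0], rule exI[of _ 0],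
              rule exI[of _ "b41 + b11 - q"], rule exI[of _ 0],
              rule exI[of _ "(b32 * x2 + b33 * x3 + b34 * x4 - q^3 * x3) / x4"],
              rule exI[of _ "(b52 * x2 + b54 * x4 + (b22 + b52) * x5
                  - ((b41 + b11)^2 - q^2) * x2 - (b41 + b11)^2 * x5) / x4"])
          using False x1 q n44 by (simp add: AC_def Tv defs field_simps)
      next
        case x4: True
        show ?thesis
        proof (cases "x2 = 0")
          case False
          show ?thesis
            apply (rule exI[of _ q],
                rule exI[of _ "(b32 * x2 + b33 * x3 - q^3 * x3) / (2 * q * x2)"], rule exI[of _ 0],
                rule exI[of _ "t - q"], rule exI[of _ 0], rule exI[of _ 0], rule exI[of _ 0])
            using False x1 x4 q t by (simp add: AC_def Tv defs field_simps)
        next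
          case x2: True
          show ?thesis
            apply (rule exI[of _ r], rule exI[of _ 0], rule exI[of _ 0],
                rule exI[of _ "t - r"], rule exI[of _ 0], rule exI[of _ 0], rule exI[of _ 0])
            using x2 x1 x4 r t by (simp add: AC_def Tv defs field_simps)
        qed
      qed
    qed
  qed
  then show "pi2_local_automorphism T" using local_iff[OF assms] by blast
qed

end
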